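(* There is a constant $c_1>0$ such that for all sufficiently large $n$, $$h_3(n,4,1) > c_1\left(\frac{\log n}{\log\log n}\right)^{1/2}.$$ Equivalently, every $n$-vertex $3$-graph in which no four vertices span exactly one edge has a clique or coclique of size greater than $c_1(\log n/\log\log n)^{1/2}$.
   Context: For an $r$-uniform hypergraph ($r$-graph) $H$, a homogeneous set is a set of vertices that is either a clique (every $r$-subset is an edge) or a coclique (no $r$-subset is an edge); $h(H)$ denotes the size of a largest homogeneous set. An $(m,f)$-graph is an $r$-graph with $m$ vertices and $f$ edges; $H$ is $(m,f)$-free if it contains no induced sub-hypergraph that is an $(m,f)$-graph. For a set $Q$ of pairs $(m,f)$, $H$ is $Q$-free if it is $(m,f)$-free for every $(m,f)\in Q$. $h_r(n,Q)$ is the minimum of $h(H)$ over all $n$-vertex $Q$-free $r$-graphs $H$, and $h_r(n,m,f)=h_r(n,\{(m,f)\})$. *)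

theory Defs
  imports "HOL-Analysis.Analysis"
begin

definition is_rgraph :: "nat \<Rightarrow> 'a set \<Rightarrow> 'a set set \<Rightarrow> bool" where
  "is_rgraph r V E \<longleftrightarrow> (\<forall>e\<in>E. e \<subseteq> V \<and> card e = r)"

definition homogeneous :: "nat \<Rightarrow> 'a set set \<Rightarrow> 'a set \<Rightarrow> bool" where
  "homogeneous r E S \<longleftrightarrow>
     (\<forall>e. e \<subseteq> S \<and> card e = r \<longrightarrow> e \<in> E) \<or> (\<forall>e. e \<subseteq> S \<and> card e = r \<longrightarrow> e \<notin> E)"

definition hom_number :: "nat \<Rightarrow> 'a set \<Rightarrow> 'a set set \<Rightarrow> nat" where
  "hom_number r V E = Max {card S | S. S \<subseteq> V \<and> homogeneous r E S}"

definition mf_free :: "'a set \<Rightarrow> 'a set set \<Rightarrow> nat \<Rightarrow> nat \<Rightarrow> bool" where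
  "mf_free V E m f \<longleftrightarrow> \<not> (\<exists>S. S \<subseteq> V \<and> card S = m \<and> card {e \<in> E. e \<subseteq> S} = f)"

definition h_Q :: "nat \<Rightarrow> nat \<Rightarrow> (nat \<times> nat) set \<Rightarrow> nat" where
  "h_Q r n Q = Min {hom_number r {..<n} E | E.
      is_rgraph r {..<n} E \<and> (\<forall>(m,f)\<in>Q. mf_free {..<n} E m f)}"

definition h_mf :: "nat \<Rightarrow> nat \<Rightarrow> nat \<Rightarrow> nat \<Rightarrow> nat" where
  "h_mf r n m f = h_Q r n {(m, f)}"

end

theory Submission imports Defs begin

lemma three_sub:
  assumes "e \<subseteq> {a,b,c,d}" "card e = 3" "distinct [a,b,c,d]"
  shows "e = {b,c,d} \<or> e = {a,c,d} \<or> e = {a,b,d} \<or> e = {a,b,c}"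
proof -
  have fe: "finite e" using assms(2) by (metis card.infinite zero_neq_numeral)
  have c4: "card {a,b,c,d} = 4" using assms(3) by auto
  have "\<not> {a,b,c,d} \<subseteq> e"
  proof
    assume "{a,b,c,d} \<subseteq> e"
    then have "card {a,b,c,d} \<le> card e" using fe card_mono by blast
    then show False using c4 assms(2) by simp
  qed
  then obtain u where u: "u \<in> {a,b,c,d}" "u \<notin> e" by blast
  then have sub: "e \<subseteq> {a,b,c,d} - {u}" using assms(1) by blast
  have c3: "card ({a,b,c,d} - {u}) = 3" using c4 u(1) by simp
  have "e = {a,b,c,d} - {u}"
    using card_subset_eq[OF _ sub] c3 assms(2) by simp
  then show ?thesis using u(1) assms(3) by auto
qed

lemma pow_sum_card:
  fixes q :: real
  shows "finite A \<Longrightarrow> (\<Sum>Z\<in>Pow A. q ^ card Z) = (1 + q) ^ card A"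
proof (induction A rule: finite_induct)
  case empty
  then show ?case by simp
next
  case (insert a A)
  have disj: "Pow A \<inter> insert a ` Pow A = {}" using insert.hyps by blast
  have inj: "inj_on (insert a) (Pow A)" using insert.hyps
    by (smt (verit, best) PowD inj_onI insert_absorb insert_ident subset_iff)
  have "(\<Sum>Z\<in>Pow (insert a A). q ^ card Z)
      = (\<Sum>Z\<in>Pow A. q ^ card Z) + (\<Sum>Z\<in>insert a ` Pow A. q ^ card Z)"
    unfolding Pow_insert using insert.hyps disj by (simp add: sum.union_disjoint)
  also have "(\<Sum>Z\<in>insert a ` Pow A. q ^ card Z) = (\<Sum>Z\<in>Pow A. q ^ card (insert a Z))"
    by (simp add: sum.reindex[OF inj])
  also have "\<dots> = (\<Sum>Z\<in>Pow A. q * q ^ card Z)"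
  proof (rule sum.cong)
    fix Z assume "Z \<in> Pow A"
    then have "finite Z" "a \<notin> Z" using insert.hyps finite_subset by auto
    then show "q ^ card (insert a Z) = q * q ^ card Z" by simp
  qed simp
  finally show ?case using insert by (simp add: sum_distrib_left[symmetric] algebra_simps)
qed

lemma weighted_pigeon:
  fixes cls :: "'b set \<Rightarrow> 'a set" and S0 :: "'a set" and A :: "'b set"
  assumes finA: "finite A" and finS0: "finite S0" and U: "S0 = (\<Union>Z\<in>Pow A. cls Z)"
    and disj: "\<And>Z Z'. Z\<in>Pow A \<Longrightarrow> Z'\<in>Pow A \<Longrightarrow> Z\<noteq>Z' \<Longrightarrow> cls Z \<inter> cls Z' = {}"
    and cA: "card A < k" and ne: "S0 \<noteq> {}"
  shows "\<exists>Z\<in>Pow A. real (card S0) \<le> 3 * real k ^ card Z * real (card (cls Z))"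
proof (rule ccontr)
  assume nt: "\<not> ?thesis"
  have lt: "3 * real k ^ card Z * real (card (cls Z)) < real (card S0)" if "Z \<in> Pow A" for Z
    using nt that by (meson not_le)
  have kp: "real k > 0" using cA by simp
  have fc: "finite (cls Z)" if "Z \<in> Pow A" for Z
    using finS0 U that by (metis UN_upper finite_subset)
  have "card S0 = (\<Sum>Z\<in>Pow A. card (cls Z))"
    unfolding U
    by (rule card_UN_disjoint) (use finA fc disj in auto)
  then have "real (card S0) = (\<Sum>Z\<in>Pow A. real (card (cls Z)))" by simp
  also have "\<dots> < (\<Sum>Z\<in>Pow A. real (card S0) / 3 * (1 / real k) ^ card Z)"
  proof (rule sum_strict_mono)
    show "finite (Pow A)" using finA by simp
    show "Pow A \<noteq> {}" by auto
    fix Z assume Z: "Z \<in> Pow A"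
    have kz: "real k ^ card Z > 0" using kp by simp
    have "real (card (cls Z)) < real (card S0) / (3 * real k ^ card Z)"
      using lt[OF Z] kz by (simp add: pos_less_divide_eq mult.commute)
    also have "\<dots> = real (card S0) / 3 * (1 / real k) ^ card Z"
      by (simp add: power_one_over)
    finally show "real (card (cls Z)) < real (card S0) / 3 * (1 / real k) ^ card Z" .
  qed
  also have "\<dots> = real (card S0) / 3 * (\<Sum>Z\<in>Pow A. (1 / real k) ^ card Z)"
    by (rule sum_distrib_left[symmetric])
  also have "\<dots> = real (card S0) / 3 * (1 + 1 / real k) ^ card A"
    by (simp only: pow_sum_card[OF finA])
  also have "\<dots> \<le> real (card S0) / 3 * 3"
  proof -
    have "(1 + 1 / real k) ^ card A \<le> exp (1 / real k) ^ card A"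
      by (rule power_mono) (use exp_ge_add_one_self in auto)
    also have "\<dots> = exp (real (card A) * (1 / real k))" by (rule exp_of_nat_mult[symmetric])
    also have "\<dots> \<le> exp 1"
      using cA kp by simp
    also have "\<dots> \<le> 3" by (rule exp_le)
    finally show ?thesis by (intro mult_left_mono) auto
  qed
  finally show False by simp
qed

lemma hom_sorted:
  assumes inj: "inj_on v Q"
    and P: "\<And>a b d. a\<in>Q \<Longrightarrow> b\<in>Q \<Longrightarrow> d\<in>Q \<Longrightarrow> a<b \<Longrightarrow> b<d \<Longrightarrow> P {v a, v b, v (d::nat)}"
  shows "\<forall>e. e \<subseteq> v`Q \<and> card e = 3 \<longrightarrow> P e"
proof (intro allI impI)
  fix e assume e: "e \<subseteq> v`Q \<and> card e = 3"
  then obtain x y z where xyz: "e = {x,y,z}" "x\<noteq>y" "y\<noteq>z" "x\<noteq>z"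
    by (metis card_3_iff)
  then obtain a b d where abd: "a\<in>Q" "b\<in>Q" "d\<in>Q" "x = v a" "y = v b" "z = v d"
    using e by (metis image_iff insert_subset)
  have dist: "a\<noteq>b" "b\<noteq>d" "a\<noteq>d" using abd xyz by auto
  have key: "\<And>a b d. a\<in>Q \<Longrightarrow> b\<in>Q \<Longrightarrow> d\<in>Q \<Longrightarrow> a<b \<Longrightarrow> b<d \<Longrightarrow>
     P {v a, v b, v d} \<and> P {v a, v d, v b} \<and> P {v b, v a, v d} \<and> P {v b, v d, v a} \<and> P {v d, v a, v b} \<and> P {v d, v b, v a}"
    using P by (simp add: insert_commute)
  have "a<b \<and> b<d \<or> a<d \<and> d<b \<or> b<a \<and> a<d \<or> b<d \<and> d<a \<or> d<a \<and> a<b \<or> d<b \<and> b<a"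
    using dist by arith
  then show "P e" unfolding xyz abd
    using key[OF abd(1,2,3)] key[OF abd(1,3,2)] key[OF abd(2,1,3)] key[OF abd(2,3,1)] key[OF abd(3,1,2)] key[OF abd(3,2,1)]
    by blast
qed

lemma ES_lemma:
  fixes G :: "nat \<Rightarrow> nat \<Rightarrow> bool"
  assumes tw: "\<And>i j d. i\<in>U \<Longrightarrow> j\<in>U \<Longrightarrow> d\<in>U \<Longrightarrow> i<j \<Longrightarrow> j<d \<Longrightarrow> \<not> G i j \<Longrightarrow> (G i d \<longleftrightarrow> G j d)"
  shows "finite P \<Longrightarrow> P \<subseteq> U \<Longrightarrow> a*b \<le> card P \<Longrightarrow> 1 \<le> a \<Longrightarrow> 1 \<le> b \<Longrightarrow>
    (\<exists>Q\<subseteq>P. card Q = a \<and> (\<forall>i\<in>Q. \<forall>j\<in>Q. i<j \<longrightarrow> G i j)) \<or>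
    (\<exists>Q\<subseteq>P. card Q = b \<and> (\<forall>i\<in>Q. \<forall>j\<in>Q. i<j \<longrightarrow> \<not> G i j))"
proof (induction a arbitrary: P)
  case 0 then show ?case by simp
next
  case (Suc a)
  have finP: "finite P" and PU: "P \<subseteq> U" and cP: "Suc a * b \<le> card P" and b1: "1 \<le> b"
    using Suc.prems by auto
  have Pne: "P \<noteq> {}" using cP b1 by (intro notI) simp
  define i0 where "i0 = Min P"
  have i0P: "i0 \<in> P" unfolding i0_def using finP Pne by simp
  have i0le: "\<And>j. j \<in> P \<Longrightarrow> i0 \<le> j" unfolding i0_def using finP by simp
  define M where "M = {j\<in>P. i0<j \<and> \<not> G i0 j}"
  define N where "N = {j\<in>P. i0<j \<and> G i0 j}"
  have Peq: "P = insert i0 (M \<union> N)" unfolding M_def N_def using i0P i0le by force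
  have finM: "finite M" and finN: "finite N" using finP unfolding M_def N_def by auto
  have dis: "M \<inter> N = {}" unfolding M_def N_def by auto
  have i0MN: "i0 \<notin> M \<union> N" unfolding M_def N_def by auto
  have cPeq: "card P = Suc (card M + card N)"
    using Peq finM finN dis i0MN by (simp add: card_Un_disjoint)
  show ?case
  proof (cases "b - 1 \<le> card M")
    case True
    obtain M' where M': "M' \<subseteq> M" "card M' = b - 1"
      using obtain_subset_with_card_n[OF True] by blast
    have finM': "finite M'" using M' finM finite_subset by blast
    have i0M': "i0 \<notin> M'" using M' i0MN by auto
    define Q where "Q = insert i0 M'"
    have cQ: "card Q = b" unfolding Q_def using finM' i0M' M' b1 by simp
    have QP: "Q \<subseteq> P" unfolding Q_def using M' Peq by auto
    have ind: "\<forall>i\<in>Q. \<forall>j\<in>Q. i<j \<longrightarrow> \<not> G i j"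
    proof (intro ballI impI)
      fix i j assume i: "i \<in> Q" and j: "j \<in> Q" and ij: "i < j"
      have jM: "j \<in> M"
      proof -
        have "i \<in> P" using i QP by auto
        then have "j \<noteq> i0" using ij i0le[of i] by auto
        then show ?thesis using j M' unfolding Q_def by auto
      qed
      show "\<not> G i j"
      proof (cases "i = i0")
        case True then show ?thesis using jM unfolding M_def by auto
      next
        case False
        then have iM: "i \<in> M" using i M' unfolding Q_def by auto
        have "\<not> G i0 i" "i0 < i" using iM unfolding M_def by auto
        moreover have "\<not> G i0 j" using jM unfolding M_def by auto
        moreover have "i0 \<in> U" "i \<in> U" "j \<in> U" using i0P iM jM PU unfolding M_def by auto
        ultimately show ?thesis using tw[of i0 i j] ij by auto
      qed
    qed
    show ?thesis by (intro disjI2 exI[of _ Q]) (simp add: cQ QP ind)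
  next
    case False
    show ?thesis
    proof (cases "a = 0")
      case True
      have "{i0} \<subseteq> P \<and> card {i0} = Suc a \<and> (\<forall>i\<in>{i0}. \<forall>j\<in>{i0}. i<j \<longrightarrow> G i j)"
        using i0P True by auto
      then show ?thesis by (intro disjI1 exI[of _ "{i0}"]) simp
    next
      case False
      have cN: "a * b \<le> card N" using cPeq cP \<open>\<not> b - 1 \<le> card M\<close> by simp
      have NU: "N \<subseteq> U" using PU Peq by auto
      have IH: "(\<exists>Q\<subseteq>N. card Q = a \<and> (\<forall>i\<in>Q. \<forall>j\<in>Q. i<j \<longrightarrow> G i j)) \<or>
          (\<exists>Q\<subseteq>N. card Q = b \<and> (\<forall>i\<in>Q. \<forall>j\<in>Q. i<j \<longrightarrow> \<not> G i j))"
        using Suc.IH[OF finN NU cN] False b1 by simp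
      then show ?thesis
      proof
        assume "\<exists>Q\<subseteq>N. card Q = a \<and> (\<forall>i\<in>Q. \<forall>j\<in>Q. i<j \<longrightarrow> G i j)"
        then obtain Q where Q: "Q \<subseteq> N" "card Q = a" "\<forall>i\<in>Q. \<forall>j\<in>Q. i<j \<longrightarrow> G i j" by blast
        have finQ: "finite Q" using Q(1) finN finite_subset by blast
        have i0Q: "i0 \<notin> Q" using Q(1) i0MN by auto
        have "insert i0 Q \<subseteq> P" using Q(1) Peq by auto
        moreover have "card (insert i0 Q) = Suc a" using finQ i0Q Q(2) by simp
        moreover have "\<forall>i\<in>insert i0 Q. \<forall>j\<in>insert i0 Q. i<j \<longrightarrow> G i j"
        proof (intro ballI impI)
          fix i j assume i: "i \<in> insert i0 Q" and j: "j \<in> insert i0 Q" and ij: "i < j"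
          have "i \<in> P" using i Q(1) Peq by auto
          then have "j \<noteq> i0" using ij i0le[of i] by auto
          then have jQ: "j \<in> Q" using j by auto
          show "G i j"
          proof (cases "i = i0")
            case True then show ?thesis using jQ Q(1) unfolding N_def by auto
          next
            case False then show ?thesis using i jQ ij Q(3) by auto
          qed
        qed
        ultimately show ?thesis by (intro disjI1 exI[of _ "insert i0 Q"]) simp
      next
        assume "\<exists>Q\<subseteq>N. card Q = b \<and> (\<forall>i\<in>Q. \<forall>j\<in>Q. i<j \<longrightarrow> \<not> G i j)"
        then obtain Q where "Q\<subseteq>N" "card Q = b" "\<forall>i\<in>Q. \<forall>j\<in>Q. i<j \<longrightarrow> \<not> G i j" by blast
        moreover have "Q \<subseteq> P" using \<open>Q \<subseteq> N\<close> Peq by auto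
        ultimately show ?thesis by (intro disjI2 exI[of _ Q]) simp
      qed
    qed
  qed
qed

definition later :: "nat \<Rightarrow> (nat \<Rightarrow> nat) \<Rightarrow> nat set \<Rightarrow> nat \<Rightarrow> nat set" where
  "later t v S j = v ` {j<..<t} \<union> S"

locale H41 =
  fixes n :: nat and E :: "nat set set" and k :: nat
  assumes rg: "is_rgraph 3 {..<n} E" and free: "mf_free {..<n} E 4 1"
    and small: "\<And>S. S \<subseteq> {..<n} \<Longrightarrow> homogeneous 3 E S \<Longrightarrow> card S < k"
begin

abbreviation "V \<equiv> {..<n}"

lemma twin:
  assumes "a \<in> V" "b \<in> V" "x \<in> V" "y \<in> V" "distinct [a,b,x,y]"
    and "{a,b,x} \<notin> E" "{a,b,y} \<notin> E"
  shows "{a,x,y} \<in> E \<longleftrightarrow> {b,x,y} \<in> E"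
proof (rule ccontr)
  assume ne: "\<not> ({a,x,y} \<in> E \<longleftrightarrow> {b,x,y} \<in> E)"
  define S where "S = {a,b,x,y}"
  have SV: "S \<subseteq> V" using assms unfolding S_def by auto
  have cS: "card S = 4" using assms(5) unfolding S_def by auto
  have edges: "\<And>e. e \<in> E \<Longrightarrow> e \<subseteq> S \<Longrightarrow> e = {b,x,y} \<or> e = {a,x,y}"
  proof -
    fix e assume "e \<in> E" "e \<subseteq> S"
    moreover have "card e = 3" using rg \<open>e \<in> E\<close> unfolding is_rgraph_def by auto
    ultimately have "e = {b,x,y} \<or> e = {a,x,y} \<or> e = {a,b,y} \<or> e = {a,b,x}"
      using three_sub[of e a b x y] assms(5) unfolding S_def by auto
    then show "e = {b,x,y} \<or> e = {a,x,y}" using assms(6,7) \<open>e \<in> E\<close> by auto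
  qed
  have "{e \<in> E. e \<subseteq> S} = {{a,x,y}} \<or> {e \<in> E. e \<subseteq> S} = {{b,x,y}}"
  proof (cases "{a,x,y} \<in> E")
    case True
    then have "{b,x,y} \<notin> E" using ne by blast
    then show ?thesis using True edges unfolding S_def by auto
  next
    case False
    then have "{b,x,y} \<in> E" using ne by blast
    then show ?thesis using False edges unfolding S_def by auto
  qed
  then have "card {e \<in> E. e \<subseteq> S} = 1" by auto
  then show False using free SV cS unfolding mf_free_def by blast
qed

definition invs :: "nat \<Rightarrow> (nat \<Rightarrow> nat) \<Rightarrow> nat set \<Rightarrow> nat set \<Rightarrow> bool" where
  "invs t v S A \<longleftrightarrow>
    S \<subseteq> V \<and> (\<forall>i<t. v i \<in> V \<and> v i \<notin> S) \<and> inj_on v {..<t} \<and>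
    (\<forall>i j. i<j \<longrightarrow> j<t \<longrightarrow> (\<forall>x\<in>later t v S j. \<forall>y\<in>later t v S j.
        ({v i, v j, x} \<in> E \<longleftrightarrow> {v i, v j, y} \<in> E))) \<and>
    A \<subseteq> {..<t} \<and>
    (\<forall>a\<in>A. \<forall>b\<in>A. a<b \<longrightarrow> (\<forall>x\<in>later t v S b. {v a, v b, x} \<in> E)) \<and>
    (\<forall>i<t. i \<notin> A \<longrightarrow> (\<exists>r\<in>A. \<forall>x\<in>S. \<forall>y\<in>S. x\<noteq>y \<longrightarrow> ({v i, x, y} \<in> E \<longleftrightarrow> {v r, x, y} \<in> E)))"

lemma k_pos: "1 \<le> k"
  using small[of "{}"] unfolding homogeneous_def by auto

lemma inv_A_small:
  assumes "invs t v S A" shows "card A < k"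
proof -
  have A: "A \<subseteq> {..<t}" and inj: "inj_on v {..<t}" and vV: "\<forall>i<t. v i \<in> V"
    and cl: "\<forall>a\<in>A. \<forall>b\<in>A. a<b \<longrightarrow> (\<forall>x\<in>later t v S b. {v a, v b, x} \<in> E)"
    using assms unfolding invs_def by auto
  have injA: "inj_on v A" using inj A inj_on_subset by blast
  have "\<forall>e. e \<subseteq> v`A \<and> card e = 3 \<longrightarrow> e \<in> E"
  proof (rule hom_sorted[OF injA])
    fix a b d assume "a\<in>A" "b\<in>A" "d\<in>A" "a<b" "b<d"
    moreover have "v d \<in> later t v S b" unfolding later_def using \<open>d\<in>A\<close> \<open>b<d\<close> A by auto
    ultimately show "{v a, v b, v d} \<in> E" using cl by blast
  qed
  then have "homogeneous 3 E (v`A)" unfolding homogeneous_def by blast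
  moreover have "v`A \<subseteq> V" using vV A by auto
  ultimately have "card (v`A) < k" using small by blast
  then show ?thesis using card_image[OF injA] by simp
qed

lemma inv_init: "invs 0 v V {}"
  unfolding invs_def later_def by auto


lemma later_sub:
  assumes "j < t" "S' \<subseteq> S" "x \<in> S"
  shows "later (Suc t) (v(t:=x)) S' j \<subseteq> later t v S j"
proof
  fix y assume "y \<in> later (Suc t) (v(t:=x)) S' j"
  then consider m where "m \<in> {j<..<Suc t}" "y = (v(t:=x)) m" | "y \<in> S'"
    unfolding later_def by blast
  then show "y \<in> later t v S j"
  proof cases
    case 1
    show ?thesis
    proof (cases "m = t")
      case True then show ?thesis using 1 assms unfolding later_def by auto
    next
      case False then show ?thesis using 1 assms unfolding later_def by auto
    qed
  next
    case 2 then show ?thesis using assms unfolding later_def by auto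
  qed
qed

lemma later_top: "later (Suc t) v' S' t = S'"
  unfolding later_def by auto

lemma step:
  assumes invs: "invs t v S A" and cS: "2 \<le> card S"
  shows "\<exists>v' S' A' z. invs (Suc t) v' S' A' \<and> card A' + z = card A + 1 \<and> card S \<le> 6 * k^z * card S'"
proof -
  note I = invs[unfolded invs_def]
  note SV = I[THEN conjunct1]
  note vV = I[THEN conjunct2, THEN conjunct1]
  note inj = I[THEN conjunct2, THEN conjunct2, THEN conjunct1]
  note EH = I[THEN conjunct2, THEN conjunct2, THEN conjunct2, THEN conjunct1]
  note At = I[THEN conjunct2, THEN conjunct2, THEN conjunct2, THEN conjunct2, THEN conjunct1]
  note cl = I[THEN conjunct2, THEN conjunct2, THEN conjunct2, THEN conjunct2, THEN conjunct2, THEN conjunct1]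
  note rep = I[THEN conjunct2, THEN conjunct2, THEN conjunct2, THEN conjunct2, THEN conjunct2, THEN conjunct2]
  have finS: "finite S" using SV finite_subset by blast
  have finA: "finite A" using At finite_subset by blast
  have cA: "card A < k" using inv_A_small[OF invs] .
  obtain x where xS: "x \<in> S" using cS by (metis all_not_in_conv card.empty not_numeral_le_zero)
  define S0 where "S0 = S - {x}"
  have cS0: "card S0 = card S - 1" unfolding S0_def using xS finS by simp
  have finS0: "finite S0" using finS unfolding S0_def by simp
  define f where "f w = {a\<in>A. {v a, x, w} \<notin> E}" for w
  define cls where "cls Z = {w\<in>S0. f w = Z}" for Z
  have U: "S0 = (\<Union>Z\<in>Pow A. cls Z)" unfolding cls_def f_def by auto
  have disj: "\<And>Z Z'. Z\<in>Pow A \<Longrightarrow> Z'\<in>Pow A \<Longrightarrow> Z\<noteq>Z' \<Longrightarrow> cls Z \<inter> cls Z' = {}"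
    unfolding cls_def by auto
  have ne: "S0 \<noteq> {}" using cS0 cS by auto
  have ex: "\<exists>Z\<in>Pow A. real (card S0) \<le> 3 * real k ^ card Z * real (card (cls Z))"
    by (rule weighted_pigeon[OF finA finS0 U disj cA ne])
  then obtain Z where Z: "Z \<subseteq> A" and bound: "real (card S0) \<le> 3 * real k ^ card Z * real (card (cls Z))"
    by blast
  define S' where "S' = cls Z"
  define A' where "A' = (A - Z) \<union> {t}"
  define v' where "v' = v(t := x)"
  have S'S0: "S' \<subseteq> S0" unfolding S'_def cls_def by auto
  have S'S: "S' \<subseteq> S" using S'S0 unfolding S0_def by auto
  have xS': "x \<notin> S'" using S'S0 unfolding S0_def by auto
  have fS': "\<And>w. w \<in> S' \<Longrightarrow> f w = Z" unfolding S'_def cls_def by auto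
  have memZ: "\<And>a w. a \<in> A \<Longrightarrow> w \<in> S' \<Longrightarrow> ({v a, x, w} \<in> E \<longleftrightarrow> a \<notin> Z)"
    using fS' unfolding f_def by auto
  have v'lt: "\<And>i. i < t \<Longrightarrow> v' i = v i" unfolding v'_def by auto
  have v't: "v' t = x" unfolding v'_def by auto
  have tA: "t \<notin> A" using At by auto
  have finZ: "finite Z" using Z finA finite_subset by blast
  have cardA': "card A' + card Z = card A + 1"
  proof -
    have "card (A - Z) = card A - card Z" using Z finZ by (simp add: card_Diff_subset)
    moreover have "card Z \<le> card A" using Z finA card_mono by blast
    moreover have "card A' = card (A - Z) + 1" unfolding A'_def using tA finA by simp
    ultimately show ?thesis by simp
  qed
  have cardS: "card S \<le> 6 * k ^ card Z * card S'"
  proof -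
    have "real (card S) \<le> 2 * real (card S0)" using cS0 cS by simp
    also have "\<dots> \<le> 2 * (3 * real k ^ card Z * real (card S'))" using bound unfolding S'_def by (simp add: algebra_simps)
    finally have "real (card S) \<le> real (6 * k ^ card Z * card S')" by simp
    then show ?thesis by linarith
  qed
  have crep: "\<And>i. i < t \<Longrightarrow> \<exists>r\<in>A. \<forall>w\<in>S0. ({v i, x, w} \<in> E \<longleftrightarrow> {v r, x, w} \<in> E)"
  proof -
    fix i assume it: "i < t"
    show "\<exists>r\<in>A. \<forall>w\<in>S0. ({v i, x, w} \<in> E \<longleftrightarrow> {v r, x, w} \<in> E)"
    proof (cases "i \<in> A")
      case True then show ?thesis by blast
    next
      case False
      then obtain r where r: "r \<in> A" "\<forall>p\<in>S. \<forall>q\<in>S. p\<noteq>q \<longrightarrow> ({v i, p, q} \<in> E \<longleftrightarrow> {v r, p, q} \<in> E)"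
        using rep it by blast
      show ?thesis
        using r xS unfolding S0_def by (intro bexI[of _ r]) auto
    qed
  qed
  have twinZ: "\<And>r p q. r \<in> Z \<Longrightarrow> p \<in> S' \<Longrightarrow> q \<in> S' \<Longrightarrow> p \<noteq> q \<Longrightarrow> ({v r, p, q} \<in> E \<longleftrightarrow> {x, p, q} \<in> E)"
  proof -
    fix r p q assume r: "r \<in> Z" and p: "p \<in> S'" and q: "q \<in> S'" and pq: "p \<noteq> q"
    have rt: "r < t" using r Z At by auto
    have rA: "r \<in> A" using r Z by auto
    have d: "distinct [v r, x, p, q]"
      using vV rt xS p q pq xS' S'S by auto
    show "{v r, p, q} \<in> E \<longleftrightarrow> {x, p, q} \<in> E"
    proof (rule twin)
      show "v r \<in> V" using vV rt by auto
      show "x \<in> V" "p \<in> V" "q \<in> V" using xS p q S'S SV by auto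
      show "distinct [v r, x, p, q]" by fact
      show "{v r, x, p} \<notin> E" using memZ[OF rA p] r by auto
      show "{v r, x, q} \<notin> E" using memZ[OF rA q] r by auto
    qed
  qed
  have "invs (Suc t) v' S' A'"
    unfolding invs_def
  proof (intro conjI allI impI ballI)
    show "S' \<subseteq> V" using S'S SV by auto
  next
    fix i assume "i < Suc t"
    then show "v' i \<in> V" using vV v'lt v't xS SV by (cases "i = t") auto
  next
    fix i assume "i < Suc t"
    then show "v' i \<notin> S'" using vV v'lt v't xS' S'S by (cases "i = t") auto
  next
    have "inj_on v' {..<t}" using inj v'lt by (simp add: inj_on_def)
    moreover have "v' t \<notin> v' ` {..<t}" using vV v'lt v't xS by auto
    ultimately show "inj_on v' {..<Suc t}" by (simp add: lessThan_Suc)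
  next
    fix i j y z assume ij: "i < j" "j < Suc t" and y: "y \<in> later (Suc t) v' S' j"
      and z: "z \<in> later (Suc t) v' S' j"
    show "{v' i, v' j, y} \<in> E \<longleftrightarrow> {v' i, v' j, z} \<in> E"
    proof (cases "j = t")
      case False
      then have jt: "j < t" using ij by simp
      have "later (Suc t) v' S' j \<subseteq> later t v S j" unfolding v'_def by (rule later_sub[OF jt S'S xS])
      then have yy: "y \<in> later t v S j" "z \<in> later t v S j" using y z by auto
      have "{v i, v j, y} \<in> E \<longleftrightarrow> {v i, v j, z} \<in> E" using EH ij(1) jt yy by blast
      moreover have "v' i = v i" "v' j = v j" using v'lt ij(1) jt by auto
      ultimately show ?thesis by simp
    next
      case True
      then have yS: "y \<in> S'" and zS: "z \<in> S'" using y z later_top by auto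
      have it: "i < t" using ij True by simp
      obtain r where r: "r \<in> A" "\<forall>w\<in>S0. ({v i, x, w} \<in> E \<longleftrightarrow> {v r, x, w} \<in> E)"
        using crep[OF it] by blast
      have "{v i, x, y} \<in> E \<longleftrightarrow> {v i, x, z} \<in> E"
        using r memZ[OF r(1) yS] memZ[OF r(1) zS] yS zS S'S0 by auto
      then show ?thesis using True v't v'lt[OF it] by simp
    qed
  next
    show "A' \<subseteq> {..<Suc t}" using At unfolding A'_def by auto
  next
    fix a b y assume a: "a \<in> A'" and b: "b \<in> A'" and ab: "a < b" and y: "y \<in> later (Suc t) v' S' b"
    have aA: "a \<in> A - Z" using a ab b At unfolding A'_def by auto
    show "{v' a, v' b, y} \<in> E"
    proof (cases "b = t")
      case True
      then have yS: "y \<in> S'" using y later_top by auto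
      have "a < t" using aA At by auto
      then have "v' a = v a" using v'lt by auto
      moreover have "{v a, x, y} \<in> E" using memZ[of a y] aA yS by auto
      ultimately show ?thesis using True v't by simp
    next
      case False
      then have bA: "b \<in> A - Z" using b unfolding A'_def by auto
      have bt: "b < t" using bA At by auto
      have "later (Suc t) v' S' b \<subseteq> later t v S b" unfolding v'_def by (rule later_sub[OF bt S'S xS])
      then have yy: "y \<in> later t v S b" using y by auto
      have "{v a, v b, y} \<in> E" using cl aA bA ab yy by blast
      moreover have "v' a = v a" "v' b = v b" using v'lt ab bt by auto
      ultimately show ?thesis by simp
    qed
  next
    fix i assume i: "i < Suc t" "i \<notin> A'"
    then have it: "i < t" unfolding A'_def by auto
    show "\<exists>r\<in>A'. \<forall>p\<in>S'. \<forall>q\<in>S'. p \<noteq> q \<longrightarrow> ({v' i, p, q} \<in> E \<longleftrightarrow> {v' r, p, q} \<in> E)"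
    proof (cases "i \<in> A")
      case True
      then have iZ: "i \<in> Z" using i unfolding A'_def by auto
      show ?thesis
        using twinZ[OF iZ] v't v'lt[OF it] unfolding A'_def by (intro bexI[of _ t]) auto
    next
      case False
      then obtain r where r: "r \<in> A" "\<forall>p\<in>S. \<forall>q\<in>S. p\<noteq>q \<longrightarrow> ({v i, p, q} \<in> E \<longleftrightarrow> {v r, p, q} \<in> E)"
        using rep it by blast
      have rt: "r < t" using r At by auto
      show ?thesis
      proof (cases "r \<in> Z")
        case True
        show ?thesis
        proof (rule bexI[of _ t])
          show "t \<in> A'" unfolding A'_def by auto
          show "\<forall>p\<in>S'. \<forall>q\<in>S'. p \<noteq> q \<longrightarrow> ({v' i, p, q} \<in> E \<longleftrightarrow> {v' t, p, q} \<in> E)"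
          proof (intro ballI impI)
            fix p q assume pq: "p \<in> S'" "q \<in> S'" "p \<noteq> q"
            then have "p \<in> S" "q \<in> S" using S'S by auto
            have "{v i, p, q} \<in> E \<longleftrightarrow> {v r, p, q} \<in> E" using r(2) \<open>p \<in> S\<close> \<open>q \<in> S\<close> pq(3) by blast
            also have "\<dots> \<longleftrightarrow> {x, p, q} \<in> E" using twinZ[OF True pq] .
            finally show "{v' i, p, q} \<in> E \<longleftrightarrow> {v' t, p, q} \<in> E" using v't v'lt[OF it] by simp
          qed
        qed
      next
        case False
        show ?thesis
          using r S'S v'lt[OF it] v'lt[OF rt] False unfolding A'_def
          by (intro bexI[of _ r]) auto
      qed
    qed
  qed
  then show ?thesis using cardA' cardS by blast
qed



lemma iterate:
  assumes big: "2 * (6*k)^T \<le> n"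
  shows "t \<le> T \<Longrightarrow> \<exists>v S A. invs t v S A \<and> n \<le> card S * 6^t * k^(t - card A)"
proof (induction t)
  case 0
  have "invs 0 (\<lambda>_. 0) V {}" by (rule inv_init)
  then show ?case by force
next
  case (Suc t)
  then obtain v S A where I: "invs t v S A" and nb: "n \<le> card S * 6^t * k^(t - card A)" by auto
  have At: "A \<subseteq> {..<t}" using I unfolding invs_def by blast
  have finA: "finite A" using At finite_subset by blast
  have cAt: "card A \<le> t" using card_mono[OF _ At] by simp
  have k1: "1 \<le> k" by (rule k_pos)
  have "k^(t - card A) \<le> k^t" using k1 by (intro power_increasing) auto
  then have nb2: "n \<le> card S * (6^t * k^t)" using nb
    by (metis (no_types, lifting) le_trans mult.assoc mult_le_mono2)
  have "(6*k)^t \<le> (6*k)^T" using Suc.prems k1 by (intro power_increasing) auto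
  then have "2 * (6^t * k^t) \<le> n" using big by (simp add: power_mult_distrib)
  then have "2 * (6^t * k^t) \<le> card S * (6^t * k^t)" using nb2 by linarith
  moreover have "0 < 6^t * k^t" using k1 by simp
  ultimately have cS: "2 \<le> card S" by (metis mult_le_cancel2)
  obtain v' S' A' z where I': "invs (Suc t) v' S' A'" and cA': "card A' + z = card A + 1"
    and cS': "card S \<le> 6 * k^z * card S'"
    using step[OF I cS] by blast
  have ex: "Suc t - card A' = (t - card A) + z" using cA' cAt by linarith
  have "n \<le> card S * 6^t * k^(t - card A)" by fact
  also have "\<dots> \<le> (6 * k^z * card S') * 6^t * k^(t - card A)"
    using cS' by (intro mult_right_mono) auto
  also have "\<dots> = card S' * 6^(Suc t) * k^(Suc t - card A')"
    unfolding ex by (simp add: power_add algebra_simps)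
  finally show ?case using I' by blast
qed

lemma contra:
  assumes big: "2 * (6*k)^(k*k+1) \<le> n"
  shows False
proof -
  define T where "T = k*k+1"
  obtain v S A where I: "invs T v S A"
    using iterate[of T T] big unfolding T_def by auto
  note J = I[unfolded invs_def]
  note vV = J[THEN conjunct2, THEN conjunct1]
  note inj = J[THEN conjunct2, THEN conjunct2, THEN conjunct1]
  note EH = J[THEN conjunct2, THEN conjunct2, THEN conjunct2, THEN conjunct1]
  define G where "G i j \<longleftrightarrow> {v i, v j, v (Suc j)} \<in> E" for i j
  have eh3: "{v i, v j, v d} \<in> E \<longleftrightarrow> G i j" if "i < j" "j < d" "d < T" for i j d
  proof -
    have jT: "j < T" using that by simp
    have m1: "v d \<in> later T v S j" and m2: "v (Suc j) \<in> later T v S j"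
      using that unfolding later_def by auto
    show ?thesis unfolding G_def by (rule EH[rule_format, OF that(1) jT m1 m2])
  qed
  define U where "U = {..<k*k}"
  have tw: "G i d \<longleftrightarrow> G j d"
    if "i\<in>U" "j\<in>U" "d\<in>U" "i<j" "j<d" "\<not> G i j" for i j d
  proof -
    have dT: "Suc d < T" using that unfolding U_def T_def by auto
    have mem: "i \<in> {..<T}" "j \<in> {..<T}" "d \<in> {..<T}" "Suc d \<in> {..<T}" using that dT by auto
    have d: "distinct [v i, v j, v d, v (Suc d)]"
      using that mem by (simp add: inj_on_eq_iff[OF inj])
    have "{v i, v d, v (Suc d)} \<in> E \<longleftrightarrow> {v j, v d, v (Suc d)} \<in> E"
    proof (rule twin)
      show "v i \<in> V" "v j \<in> V" "v d \<in> V" "v (Suc d) \<in> V" using vV mem by auto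
      show "distinct [v i, v j, v d, v (Suc d)]" by fact
      have "i < j" "j < d" "d < T" using that dT by auto
      then show "{v i, v j, v d} \<notin> E" using eh3[of i j d] that(6) by simp
      have "j < Suc d" "Suc d < T" using that dT by auto
      then show "{v i, v j, v (Suc d)} \<notin> E" using eh3[of i j "Suc d"] that(4,6) by simp
    qed
    then show ?thesis unfolding G_def .
  qed
  have k1: "1 \<le> k" by (rule k_pos)
  have finU: "finite U" and ck: "k*k \<le> card U" unfolding U_def by auto
  have noh: False if Q: "Q \<subseteq> U" "card Q = k" and h: "\<And>a b d. a\<in>Q \<Longrightarrow> b\<in>Q \<Longrightarrow> d\<in>Q \<Longrightarrow> a<b \<Longrightarrow> b<d \<Longrightarrow> G a b = c"
    for Q c
  proof -
    have QT: "Q \<subseteq> {..<T}" using Q(1) unfolding U_def T_def by auto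
    have injQ: "inj_on v Q" using inj_on_subset[OF inj QT] .
    have P3: "({v a, v b, v d} \<in> E) = c" if "a\<in>Q" "b\<in>Q" "d\<in>Q" "a<b" "b<d" for a b d
    proof -
      have "d < T" using QT that by auto
      then show ?thesis using eh3[of a b d] h[OF that] that by simp
    qed
    have "\<forall>e. e \<subseteq> v`Q \<and> card e = 3 \<longrightarrow> (e \<in> E) = c"
      by (rule hom_sorted[OF injQ]) (rule P3)
    then have "homogeneous 3 E (v`Q)" unfolding homogeneous_def by (cases c) auto
    moreover have "v`Q \<subseteq> V" using vV QT by auto
    ultimately have "card (v`Q) < k" using small by blast
    then show False using card_image[OF injQ] Q(2) by simp
  qed
  have "(\<exists>Q\<subseteq>U. card Q = k \<and> (\<forall>i\<in>Q. \<forall>j\<in>Q. i<j \<longrightarrow> G i j)) \<or>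
        (\<exists>Q\<subseteq>U. card Q = k \<and> (\<forall>i\<in>Q. \<forall>j\<in>Q. i<j \<longrightarrow> \<not> G i j))"
    by (rule ES_lemma[of U G U k k, OF tw finU subset_refl ck k1 k1])
  then show False
  proof
    assume "\<exists>Q\<subseteq>U. card Q = k \<and> (\<forall>i\<in>Q. \<forall>j\<in>Q. i<j \<longrightarrow> G i j)"
    then obtain Q where Q: "Q \<subseteq> U" "card Q = k" "\<forall>i\<in>Q. \<forall>j\<in>Q. i<j \<longrightarrow> G i j" by blast
    show False by (rule noh[OF Q(1,2), of True]) (use Q(3) in auto)
  next
    assume "\<exists>Q\<subseteq>U. card Q = k \<and> (\<forall>i\<in>Q. \<forall>j\<in>Q. i<j \<longrightarrow> \<not> G i j)"
    then obtain Q where Q: "Q \<subseteq> U" "card Q = k" "\<forall>i\<in>Q. \<forall>j\<in>Q. i<j \<longrightarrow> \<not> G i j" by blast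
    show False by (rule noh[OF Q(1,2), of False]) (use Q(3) in auto)
  qed
qed

end

lemma h_bound:
  assumes big: "2 * (6*k)^(k*k+1) \<le> n"
  shows "k \<le> h_mf 3 n 4 1"
proof -
  define X where "X = {hom_number 3 {..<n} E | E. is_rgraph 3 {..<n} E \<and> (\<forall>(m,f)\<in>{(4::nat,1::nat)}. mf_free {..<n} E m f)}"
  have hX: "h_mf 3 n 4 1 = Min X" unfolding h_mf_def h_Q_def X_def by simp
  have "X \<subseteq> (\<lambda>E. hom_number 3 {..<n} E) ` Pow (Pow {..<n})"
    unfolding X_def is_rgraph_def by auto
  then have finX: "finite X" by (rule finite_subset) simp
  have "hom_number 3 {..<n} {} \<in> X"
    unfolding X_def is_rgraph_def mf_free_def by auto
  then have neX: "X \<noteq> {}" by auto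
  have "\<forall>x\<in>X. k \<le> x"
  proof
    fix x assume "x \<in> X"
    then obtain E where x: "x = hom_number 3 {..<n} E" and rg: "is_rgraph 3 {..<n} E"
      and fr: "mf_free {..<n} E 4 1" unfolding X_def by auto
    define Y where "Y = {card S | S. S \<subseteq> {..<n} \<and> homogeneous 3 E S}"
    have "Y \<subseteq> card ` Pow {..<n}" unfolding Y_def by auto
    then have finY: "finite Y" by (rule finite_subset) simp
    have hx: "x = Max Y" unfolding x hom_number_def Y_def by simp
    show "k \<le> x"
    proof (rule ccontr)
      assume "\<not> k \<le> x"
      then have lt: "Max Y < k" using hx by simp
      have "H41 n E k"
      proof
        show "is_rgraph 3 {..<n} E" by fact
        show "mf_free {..<n} E 4 1" by fact
        fix S assume "S \<subseteq> {..<n}" "homogeneous 3 E S"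
        then have "card S \<in> Y" unfolding Y_def by blast
        then have "card S \<le> Max Y" using finY by simp
        then show "card S < k" using lt by simp
      qed
      then show False using H41.contra big by blast
    qed
  qed
  then show ?thesis unfolding hX using finX neX by simp
qed

lemma asym:
  fixes n :: nat
  assumes nN: "exp 16384 \<le> real n"
  shows "real (h_mf 3 n 4 1) > 1/8 * sqrt (ln (real n) / ln (ln (real n)))"
proof -
  define L where "L = ln (real n)"
  define y where "y = ln L"
  define s where "s = sqrt (L / y)"
  have npos: "0 < real n" using nN by (metis exp_gt_zero less_le_trans)
  have L: "16384 \<le> L" unfolding L_def using nN npos by (metis ln_exp ln_le_cancel_iff exp_gt_zero)
  have Lpos: "0 < L" using L by simp
  have "exp 1 \<le> L" using exp_le L by linarith
  then have y1: "1 \<le> y" unfolding y_def using Lpos by (metis ln_exp ln_le_cancel_iff exp_gt_zero)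
  have sqL: "128 \<le> sqrt L"
  proof -
    have "sqrt 16384 \<le> sqrt L" using L by (rule real_sqrt_le_mono)
    moreover have "sqrt (16384::real) = 128" by (simp add: real_sqrt_unique)
    ultimately show ?thesis by simp
  qed
  have ylt: "y \<le> 2 * sqrt L"
  proof -
    have "y = 2 * ln (sqrt L)" unfolding y_def using ln_sqrt[of L] Lpos by simp
    also have "\<dots> \<le> 2 * (sqrt L - 1)" using ln_le_minus_one[of "sqrt L"] Lpos by simp
    finally show ?thesis by simp
  qed
  have LL: "L = sqrt L * sqrt L" using Lpos by simp
  have Ly64: "64 \<le> L / y"
  proof -
    have ypos: "0 < y" using y1 by simp
    have "64 * y \<le> 64 * (2 * sqrt L)" using ylt by simp
    also have "\<dots> \<le> sqrt L * sqrt L" using mult_right_mono[OF sqL, of "sqrt L"] Lpos by simp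
    finally have "64 * y \<le> L" using LL by simp
    then show ?thesis using ypos by (simp add: pos_le_divide_eq)
  qed
  have s8: "8 \<le> s"
  proof -
    have "sqrt 64 \<le> s" unfolding s_def using Ly64 by (rule real_sqrt_le_mono)
    moreover have "sqrt (64::real) = 8" by (simp add: real_sqrt_unique)
    ultimately show ?thesis by simp
  qed
  have s2: "s^2 = L / y" unfolding s_def using Ly64 by simp
  define k where "k = nat \<lceil>s/4\<rceil> + 1"
  have klo: "s/4 + 1 \<le> real k" unfolding k_def using s8 by linarith
  have khi: "real k \<le> s/2" unfolding k_def using s8 by linarith
  have k1: "1 \<le> real k" using klo s8 by linarith
  have kk: "real (k*k+1) \<le> s^2/2"
  proof -
    have "real k * real k \<le> (s/2) * (s/2)" using khi k1 by (intro mult_mono) auto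
    then have "real (k*k+1) \<le> s^2/4 + 1" by (simp add: power2_eq_square)
    also have "\<dots> \<le> s^2/2"
    proof -
      have "(8::real) * 8 \<le> s * s" using s8 by (intro mult_mono) auto
      then show ?thesis by (simp add: power2_eq_square)
    qed
    finally show ?thesis .
  qed
  have l6k: "ln (6 * real k) \<le> y"
  proof -
    have "6 * real k \<le> 3 * s" using khi by simp
    also have "\<dots> \<le> s^2" using mult_right_mono[of 3 s s] s8 by (simp add: power2_eq_square)
    also have "\<dots> \<le> L" unfolding s2 using divide_left_mono[of 1 y L] y1 Lpos by simp
    finally have "6 * real k \<le> L" .
    then have "ln (6 * real k) \<le> ln L" using k1 by (intro ln_mono) auto
    then show ?thesis unfolding y_def .
  qed
  have pos6: "0 < 6 * real k" using k1 by simp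
  have "ln (2 * (6 * real k) ^ (k*k+1)) = ln 2 + ln ((6 * real k) ^ (k*k+1))"
    using pos6 by (simp only: ln_mult) simp
  also have "\<dots> = ln 2 + real (k*k+1) * ln (6 * real k)"
    by (simp only: ln_realpow)
  also have "\<dots> \<le> L/2 + (s^2/2) * y"
  proof (rule add_mono)
    show "ln 2 \<le> L / 2" using ln_2_less_1 L by linarith
    have "0 \<le> ln (6 * real k)" using k1 by simp
    then show "real (k*k+1) * ln (6 * real k) \<le> (s^2/2) * y"
      using kk l6k by (intro mult_mono) (auto simp: power2_eq_square)
  qed
  also have "\<dots> = L" unfolding s2 using y1 by (simp add: field_simps)
  finally have "ln (2 * (6 * real k) ^ (k*k+1)) \<le> ln (real n)" unfolding L_def .
  then have "2 * (6 * real k) ^ (k*k+1) \<le> real n"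
    using npos k1 by (subst (asm) ln_le_cancel_iff) auto
  then have "real (2 * (6 * k) ^ (k*k+1)) \<le> real n" by simp
  then have "2 * (6 * k) ^ (k*k+1) \<le> n" by (simp only: of_nat_le_iff)
  then have "k \<le> h_mf 3 n 4 1" by (rule h_bound)
  then have "real k \<le> real (h_mf 3 n 4 1)" by simp
  moreover have "1/8 * s < real k" using klo s8 by linarith
  ultimately show ?thesis unfolding s_def y_def L_def by simp
qed

theorem mainTheorem2:
  shows "\<exists>c1::real. c1 > 0 \<and>
    (\<forall>\<^sub>F n in sequentially.
       real (h_mf 3 n 4 1) > c1 * sqrt (ln (real n) / ln (ln (real n))))"
proof (intro exI[of _ "1/8"] conjI)
  show "(0::real) < 1/8" by simp
  show "\<forall>\<^sub>F n in sequentially. real (h_mf 3 n 4 1) > 1/8 * sqrt (ln (real n) / ln (ln (real n)))"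
    unfolding eventually_sequentially
  proof (intro exI allI impI)
    fix n assume "nat \<lceil>exp (16384::real)\<rceil> \<le> n"
    moreover have "exp 16384 \<le> real (nat \<lceil>exp (16384::real)\<rceil>)" by (rule real_nat_ceiling_ge)
    ultimately have "exp 16384 \<le> real n" by linarith
    then show "real (h_mf 3 n 4 1) > 1/8 * sqrt (ln (real n) / ln (ln (real n)))" by (rule asym)
  qed
qed

end
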